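(* Let $\Sigma$ be a system as in the context, $\mathcal G=\mathrm{im}(\mathcal{R}each(A,G))$, $\mathcal Q=\ker(\mathcal{O}bs_n(A,C))$, and let $\mathcal S_1,\dots,\mathcal S_\delta\subseteq\mathbb R^n$ be the generalized real eigenspaces of $A$ (one for each real eigenvalue and one for each pair of complex conjugate eigenvalues). Assume that for every $k$: ($\mathcal S_k\subseteq\mathcal G$ or $\mathcal S_k\cap\mathcal G=\{0\}$) and ($\mathcal S_k\subseteq\mathcal Q$ or $\mathcal S_k\cap\mathcal Q=\{0\}$). Let $\mathcal S_\Sigma$ be the direct sum of all $\mathcal S_k$ with $\mathcal S_k\subseteq\mathcal Q$ and $\mathcal S_k\cap\mathcal G=\{0\}$, and let $R$ be any real matrix with $n$ columns such that $\ker(R)=\mathcal S_\Sigma$. Then $\ker([R\ \ -R])$ is a total relation satisfying conditions $(h_0)$–$(h_5)$ below with $R_1=R_2=R$, and it has maximal dimension among all total relations $\mathcal R=\ker([R_1\ \ -R_2])\subseteq\mathbb R^n\times\mathbb R^n$ ($R_1,R_2$ with $n$ columns and the same number of rows) satisfying: $(h_0)$ $\mathrm{diag}(A,A)\mathcal R\subseteq\mathcal R$; $(h_1)$ $R_1B=R_2B$; $(h_2)$ $R_1G\mu=R_2G\mu$; $(h_3)$ $R_1GG^TR_1^T=R_2GG^TR_2^T$; $(h_4)$ $\mathcal R\subseteq\ker([C\ \ -C])$; $(h_5)$ $\mathcal G\cap\ker(R_i)=\{0\}$ for $i=1,2$.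
   Context: $\Sigma$: $x(t+1)=Ax(t)+Bu(t)+Gw(t)$, $y(t)=Cx(t)+\nu(t)$, $t\in\mathbb N$, $x\in\mathbb R^n$, $u\in\mathbb R^m$, $w\in\mathbb R^l$, $y,\nu\in\mathbb R^p$, where $(w(t))_t$ is i.i.d. $\mathcal N(\mu,I_l)$ and $(\nu(t))_t$ is i.i.d. $\mathcal N(0,\Psi)$. $\mathcal{R}each(A,G)=[G\ AG\ \cdots\ A^{n-1}G]$; $\mathcal{O}bs_n(A,C)$ is the matrix obtained by stacking $C,CA,\dots,CA^{n-1}$ vertically. A relation $\mathcal R\subseteq\mathbb R^n\times\mathbb R^n$ is total if every $x$ is a first component and every $x'$ a second component of some pair in $\mathcal R$. *)

theory Defs
  imports "HOL-Analysis.Analysis"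
begin

text \<open>Matrix power (note: the ring operations on vec types are componentwise,
so we define the matrix power via matrix multiplication).\<close>
primrec mpow :: "real^'n^'n \<Rightarrow> nat \<Rightarrow> real^'n^'n" where
  "mpow A 0 = mat 1"
| "mpow A (Suc k) = A ** mpow A k"

text \<open>Image of the reachability matrix [G AG ... A^(n-1)G].\<close>
definition reach_space :: "real^'n^'n \<Rightarrow> real^'l^'n \<Rightarrow> (real^'n) set" where
  "reach_space A G = {\<Sum>i<CARD('n). (mpow A i ** G) *v u i | u. True}"

definition unobs_space :: "real^'n^'n \<Rightarrow> real^'n^'p \<Rightarrow> (real^'n) set" where
  "unobs_space A C = {x. \<forall>i<CARD('n). (C ** mpow A i) *v x = 0}"

definition mker :: "real^'a^'b \<Rightarrow> (real^'a) set" where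
  "mker M = {x. M *v x = 0}"

definition gen_real_eigenspaces :: "real^'n^'n \<Rightarrow> (real^'n) set set" where
  "gen_real_eigenspaces A =
     {mker (mpow (A - mat c) CARD('n)) | c. det (A - mat c) = 0}
   \<union> {mker (mpow ((A - mat a) ** (A - mat a) + mat (b^2)) CARD('n)) | a b.
        b > 0 \<and> det (\<chi> i j. complex_of_real (A $ i $ j)
                               - (if i = j then Complex a b else 0)) = 0}"

definition S_Sigma :: "real^'n^'n \<Rightarrow> real^'l^'n \<Rightarrow> real^'n^'p \<Rightarrow> (real^'n) set" where
  "S_Sigma A G C = span (\<Union>{S \<in> gen_real_eigenspaces A.
       S \<subseteq> unobs_space A C \<and> S \<inter> reach_space A G = {0}})"

definition rel_ker :: "real^'n^'k \<Rightarrow> real^'n^'k \<Rightarrow> ((real^'n) \<times> (real^'n)) set" where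
  "rel_ker R1 R2 = {(x, y). R1 *v x - R2 *v y = 0}"

definition total_rel :: "('a \<times> 'b) set \<Rightarrow> bool" where
  "total_rel \<R> \<longleftrightarrow> (\<forall>x. \<exists>y. (x, y) \<in> \<R>) \<and> (\<forall>y. \<exists>x. (x, y) \<in> \<R>)"

definition admissible ::
  "real^'n^'n \<Rightarrow> real^'m^'n \<Rightarrow> real^'l^'n \<Rightarrow> real^'n^'p \<Rightarrow> real^'l
    \<Rightarrow> real^'n^'k \<Rightarrow> real^'n^'k \<Rightarrow> bool" where
  "admissible A B G C \<mu> R1 R2 \<longleftrightarrow>
     (\<forall>(x, y) \<in> rel_ker R1 R2. (A *v x, A *v y) \<in> rel_ker R1 R2) \<and>
     R1 ** B = R2 ** B \<and>
     R1 *v (G *v \<mu>) = R2 *v (G *v \<mu>) \<and>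
     R1 ** G ** transpose G ** transpose R1 = R2 ** G ** transpose G ** transpose R2 \<and>
     rel_ker R1 R2 \<subseteq> rel_ker C C \<and>
     reach_space A G \<inter> mker R1 = {0} \<and>
     reach_space A G \<inter> mker R2 = {0}"

end

theory Submission imports Defs "HOL-Computational_Algebra.Polynomial_Factorial" "HOL-Computational_Algebra.Fundamental_Theorem_Algebra" "HOL-Computational_Algebra.Field_as_Ring" begin

definition pa :: "real^'n^'n \<Rightarrow> real poly \<Rightarrow> real^'n \<Rightarrow> real^'n" where
 "pa A p = fold_coeffs (\<lambda>a f x. a *\<^sub>R x + A *v f x) p (\<lambda>x. 0)"

lemma pa_0[simp]: "pa A 0 x = 0"
  by (simp add: pa_def)

lemma pa_pCons[simp]: "pa A (pCons a p) x = a *\<^sub>R x + A *v pa A p x"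
  by (cases "p = 0 \<and> a = 0") (auto simp add: pa_def)

lemma pa_x0[simp]: "pa A p 0 = 0"
  by (induction p) auto

lemma pa_add_vec: "pa A p (x + y) = pa A p x + pa A p y"
  by (induction p) (auto simp: algebra_simps matrix_vector_right_distrib)

lemma pa_scale_vec: "pa A p (c *\<^sub>R x) = c *\<^sub>R pa A p x"
  by (induction p) (auto simp: algebra_simps matrix_vector_mult_scaleR)

lemma pa_add: "pa A (p + q) x = pa A p x + pa A q x"
proof (induction p arbitrary: q)
  case 0 then show ?case by simp
next
  case (pCons a p)
  obtain b r where q: "q = pCons b r" by (cases q)
  show ?case by (simp add: q pCons.IH algebra_simps matrix_vector_right_distrib)
qed

lemma pa_smult: "pa A (smult c p) x = c *\<^sub>R pa A p x"
  by (induction p) (auto simp: algebra_simps matrix_vector_mult_scaleR)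

lemma pa_mult: "pa A (p * q) x = pa A p (pa A q x)"
proof (induction p)
  case 0 then show ?case by simp
next
  case (pCons a p)
  have "pa A (pCons a p * q) x = pa A (smult a q + pCons 0 (p * q)) x" by simp
  also have "\<dots> = a *\<^sub>R pa A q x + A *v pa A p (pa A q x)"
    by (simp only: pa_add pa_smult pa_pCons pCons.IH) simp
  finally show ?case by simp
qed

lemma pa_comm: "pa A p (pa A q x) = pa A q (pa A p x)"
  by (metis pa_mult mult.commute)

lemma pa_one[simp]: "pa A 1 x = x"
  by (simp add: one_pCons)

lemma pa_const: "pa A [:c:] x = c *\<^sub>R x"
  by simp

lemma pa_power: "pa A (p ^ m) x = (pa A p ^^ m) x"
  by (induction m arbitrary: x) (auto simp: pa_mult funpow_swap1)

lemma pa_A: "pa A [:0,1:] x = A *v x" by simp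

lemma pa_commA: "pa A p (A *v x) = A *v pa A p x"
  using pa_comm[of A p "[:0,1:]" x] by simp

lemma linear_pa: "linear (pa A p)"
  by (rule linearI) (auto simp: pa_add_vec pa_scale_vec)


lemma mat_mulv: "mat c *v x = c *\<^sub>R (x::real^'n)"
proof -
  have "(mat c *v x) $ i = c * x $ i" for i
  proof -
    have "(mat c *v x) $ i = (\<Sum>j\<in>UNIV. if i = j then c * x $ j else 0)"
    proof -
      have "\<And>j. (if i = j then c else 0) * x $ j = (if i = j then c * x $ j else 0)" by simp
      then show ?thesis by (simp add: matrix_vector_mult_def mat_def)
    qed
    also have "\<dots> = c * x $ i" by (simp add: sum.delta)
    finally show ?thesis .
  qed
  then show ?thesis by (simp add: vec_eq_iff)
qed

lemma mpow_vec: "mpow M k *v x = ((*v) M ^^ k) x"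
  by (induction k arbitrary: x) (auto simp: matrix_vector_mul_assoc[symmetric])

lemma pa_lin: "pa A [:-c,1:] x = (A - mat c) *v x"
  by (simp add: matrix_vector_mult_diff_rdistrib mat_mulv)

lemma vec_two: "(2::real^'n) * v = 2 *\<^sub>R v"
  by (simp add: vec_eq_iff)

lemma vec_two': "v * (2::real^'n) = 2 *\<^sub>R v"
  by (simp add: vec_eq_iff)

lemma pa_quad: "pa A [:a^2+b^2, -2*a, 1:] x = ((A - mat a) ** (A - mat a) + mat (b^2)) *v x"
  by (simp add: matrix_vector_mul_assoc[symmetric] matrix_vector_mult_diff_rdistrib
        matrix_vector_mult_add_rdistrib mat_mulv matrix_vector_mult_diff_distrib
        matrix_vector_mult_scaleR power2_eq_square scaleR_diff_right scaleR_diff_left scaleR_add_left)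
     (simp add: scaleR_diff_right vec_two)

lemma chain_stab:
  fixes U :: "nat \<Rightarrow> (real^'n) set"
  assumes sub: "\<And>j. subspace (U j)" and mono: "\<And>j. U j \<subseteq> U (Suc j)"
    and stay: "\<And>j. U (Suc j) \<subseteq> U j \<Longrightarrow> U (Suc (Suc j)) \<subseteq> U (Suc j)"
  shows "U j \<subseteq> U CARD('n)"
proof -
  let ?n = "CARD('n)"
  have ex: "\<exists>k\<le>?n. U (Suc k) \<subseteq> U k"
  proof (rule ccontr)
    assume "\<not> ?thesis"
    then have ps: "\<And>k. k \<le> ?n \<Longrightarrow> U k \<subset> U (Suc k)" using mono by blast
    have "k \<le> Suc ?n \<Longrightarrow> k \<le> dim (U k)" for k
    proof (induction k)
      case 0 then show ?case by simp
    next
      case (Suc k)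
      have "U k \<subset> U (Suc k)" using ps Suc.prems by simp
      then have "dim (U k) < dim (U (Suc k))"
        by (intro dim_psubset) (simp add: span_eq_iff[THEN iffD2, OF sub])
      then show ?case using Suc by simp
    qed
    then have "Suc ?n \<le> dim (U (Suc ?n))" by simp
    moreover have "dim (U (Suc ?n)) \<le> ?n" by (rule dim_subset_UNIV_cart)
    ultimately show False by simp
  qed
  then obtain k where k: "k \<le> ?n" "U (Suc k) \<subseteq> U k" by blast
  have st: "U (Suc (k + i)) \<subseteq> U (k + i)" for i
    by (induction i) (use k stay in auto)
  have st2: "U (k + i) \<subseteq> U k" for i
  proof (induction i)
    case (Suc i) then show ?case using st[of i] by simp
  qed simp
  have mono': "j \<le> j' \<Longrightarrow> U j \<subseteq> U j'" for j j'
    using lift_Suc_mono_le[of U, OF mono] by blast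
  show ?thesis
  proof (cases "j \<le> ?n")
    case True then show ?thesis using mono' by blast
  next
    case False
    then obtain i where "j = k + i" using k(1) by (metis le_add_diff_inverse nat_le_linear order_trans)
    then show ?thesis using st2[of i] mono'[OF k(1)] by blast
  qed
qed


lemma pa_minus: "pa A (- p) x = - pa A p x"
  by (induction p) (auto simp: vec.neg algebra_simps)

lemma pa_diff: "pa A (p - q) x = pa A p x - pa A q x"
  using pa_add[of A p "-q" x] pa_minus[of A q x] by simp

lemma linear_funpow:
  fixes f :: "'a::real_vector \<Rightarrow> 'a"
  shows "linear f \<Longrightarrow> linear (f ^^ j)"
proof (induction j)
  case 0 show ?case using linear_id by (simp add: id_def)
next
  case (Suc j) then show ?case using linear_compose[of "f ^^ j" f] by (simp add: o_def)
qed

lemma ker_stab: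
  fixes f :: "real^'n \<Rightarrow> real^'n"
  assumes lf: "linear f" and m: "(f ^^ m) x = 0"
  shows "(f ^^ CARD('n)) x = 0"
proof -
  let ?U = "\<lambda>j. {x. (f ^^ j) x = 0}"
  have "?U m \<subseteq> ?U CARD('n)"
  proof (rule chain_stab)
    show "subspace (?U j)" for j using linear_funpow[OF lf] by (rule linear_subspace_kernel)
    show "?U j \<subseteq> ?U (Suc j)" for j using linear_0[OF lf] by auto
    show "?U (Suc (Suc j)) \<subseteq> ?U (Suc j)" if h: "?U (Suc j) \<subseteq> ?U j" for j
    proof
      fix y assume "y \<in> ?U (Suc (Suc j))"
      then have "f y \<in> ?U (Suc j)" by (simp add: funpow_Suc_right del: funpow.simps)
      then have "f y \<in> ?U j" using h by blast
      then show "y \<in> ?U (Suc j)" by (simp add: funpow_Suc_right del: funpow.simps)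
    qed
  qed
  then show ?thesis using m by blast
qed

lemma krylov:
  fixes f :: "real^'n \<Rightarrow> real^'n"
  assumes lf: "linear f"
  shows "(f ^^ j) g \<in> span {(f ^^ i) g | i. i < CARD('n)}"
proof -
  let ?U = "\<lambda>j. span {(f ^^ i) g | i. i < j}"
  have "?U (Suc j) \<subseteq> ?U CARD('n)"
  proof (rule chain_stab)
    show "subspace (?U j)" for j by simp
    show "?U j \<subseteq> ?U (Suc j)" for j by (rule span_mono) auto
    show "?U (Suc (Suc j)) \<subseteq> ?U (Suc j)" if h: "?U (Suc j) \<subseteq> ?U j" for j
    proof (rule span_minimal)
      have fU: "f ` ?U j \<subseteq> ?U (Suc j)"
      proof -
        have "f ` ?U j = span (f ` {(f ^^ i) g | i. i < j})"
          by (rule linear_span_image[OF lf, symmetric])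
        also have "\<dots> \<subseteq> ?U (Suc j)"
          proof (rule span_mono, safe)
          fix i assume "i < j"
          then show "\<exists>ia. f ((f ^^ i) g) = (f ^^ ia) g \<and> ia < Suc j"
            by (intro exI[of _ "Suc i"]) auto
        qed
        finally show ?thesis .
      qed
      show "{(f ^^ i) g | i. i < Suc (Suc j)} \<subseteq> ?U (Suc j)"
      proof safe
        fix i assume i: "i < Suc (Suc j)"
        show "(f ^^ i) g \<in> ?U (Suc j)"
        proof (cases "i = Suc j")
          case True
          have "(f ^^ j) g \<in> ?U (Suc j)" by (intro span_base) auto
          then have "(f ^^ j) g \<in> ?U j" using h by blast
          then have "f ((f ^^ j) g) \<in> ?U (Suc j)" using fU by blast
          then show ?thesis using True by simp
        next
          case False then show ?thesis using i by (intro span_base) auto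
        qed
      qed
    qed simp
  qed
  moreover have "(f ^^ j) g \<in> ?U (Suc j)" by (intro span_base) auto
  ultimately show ?thesis by blast
qed

lemma pa_X: "pa A [:0,1:] = (*v) A"
  by (rule ext) simp

lemma pa_Xpow: "pa A ([:0,1:] ^ i) x = ((*v) A ^^ i) x"
  by (simp add: pa_power pa_X)

lemma degree_Xpow: "degree ([:0::real,1:] ^ i) = i"
  by (simp add: degree_power_eq)

lemma annih:
  fixes A :: "real^'n^'n"
  shows "\<exists>p. p \<noteq> 0 \<and> pa A p x = 0"
proof -
  let ?n = "CARD('n)"
  let ?W = "{pa A q x | q. degree q < ?n}"
  have sW: "subspace ?W"
    unfolding subspace_def
  proof safe
    show "\<exists>q. 0 = pa A q x \<and> degree q < ?n" by (rule exI[of _ 0]) simp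
  next
    fix q1 q2 :: "real poly" assume "degree q1 < ?n" "degree q2 < ?n"
    then show "\<exists>q. pa A q1 x + pa A q2 x = pa A q x \<and> degree q < ?n"
      by (intro exI[of _ "q1 + q2"]) (auto simp: pa_add intro: le_less_trans[OF degree_add_le_max])
  next
    fix c :: real and q :: "real poly" assume "degree q < ?n"
    then show "\<exists>q'. c *\<^sub>R pa A q x = pa A q' x \<and> degree q' < ?n"
      by (intro exI[of _ "smult c q"]) (auto simp: pa_smult intro: le_less_trans[OF degree_smult_le])
  qed
  have "span {((*v) A ^^ i) x | i. i < ?n} \<subseteq> ?W"
  proof (rule span_minimal[OF _ sW], safe)
    fix i assume "i < ?n"
    then show "\<exists>q. ((*v) A ^^ i) x = pa A q x \<and> degree q < ?n"
      by (intro exI[of _ "[:0,1:] ^ i"]) (simp add: pa_Xpow degree_Xpow)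
  qed
  moreover have "((*v) A ^^ ?n) x \<in> span {((*v) A ^^ i) x | i. i < ?n}"
    by (rule krylov) (rule matrix_vector_mul_linear)
  ultimately obtain q where q: "((*v) A ^^ ?n) x = pa A q x" "degree q < ?n" by blast
  let ?p = "[:0,1:] ^ ?n - q"
  have "coeff ?p ?n = 1"
    using q(2) by (simp add: coeff_eq_0 coeff_linear_power[of 0, simplified])
  then have "?p \<noteq> 0" by auto
  moreover have "pa A ?p x = 0" using q(1) by (simp add: pa_diff pa_Xpow)
  ultimately show ?thesis by blast
qed


definition cpoly :: "real poly \<Rightarrow> complex \<Rightarrow> complex" where
  "cpoly f z = poly (map_poly complex_of_real f) z"

lemma cpoly_0[simp]: "cpoly 0 z = 0" by (simp add: cpoly_def)

lemma cpoly_pCons[simp]: "cpoly (pCons a p) z = of_real a + z * cpoly p z"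
  by (simp add: cpoly_def map_poly_pCons)

lemma cpoly_add: "cpoly (p + q) z = cpoly p z + cpoly q z"
proof (induction p arbitrary: q)
  case (pCons a p)
  obtain b r where q: "q = pCons b r" by (cases q)
  show ?case by (simp add: q pCons.IH algebra_simps)
qed simp

lemma cpoly_smult: "cpoly (smult c p) z = of_real c * cpoly p z"
  by (induction p) (auto simp: algebra_simps)

lemma cpoly_mult: "cpoly (p * q) z = cpoly p z * cpoly q z"
proof (induction p)
  case (pCons a p)
  have "cpoly (pCons a p * q) z = cpoly (smult a q + pCons 0 (p * q)) z" by simp
  also have "\<dots> = of_real a * cpoly q z + z * (cpoly p z * cpoly q z)"
    by (simp only: cpoly_add cpoly_smult cpoly_pCons pCons.IH) simp
  finally show ?case by (simp add: algebra_simps)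
qed simp

lemma cpoly_power: "cpoly (p ^ m) z = cpoly p z ^ m"
  by (induction m) (auto simp: cpoly_mult one_pCons)

lemma cpoly_of_real: "cpoly p (of_real c) = of_real (poly p c)"
  by (induction p) auto

lemma cpoly_cnj: "cpoly p (cnj z) = cnj (cpoly p z)"
  by (induction p) auto

lemma degree_cmap: "degree (map_poly complex_of_real p) = degree p"
  by (rule degree_map_poly) simp

lemma coprime_noroot:
  fixes f g :: "real poly"
  assumes f: "f \<noteq> 0" and nr: "\<And>z. cpoly f z = 0 \<Longrightarrow> cpoly g z \<noteq> 0"
  shows "coprime f g"
proof -
  let ?d = "gcd f g"
  have d0: "?d \<noteq> 0" using f by simp
  show ?thesis
  proof (cases "degree ?d = 0")
    case True
    then have "is_unit ?d" using d0 is_unit_iff_degree by blast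
    then show ?thesis using is_unit_gcd by blast
  next
    case False
    then have "degree (map_poly complex_of_real ?d) > 0" by (simp add: degree_cmap)
    then obtain z where z: "poly (map_poly complex_of_real ?d) z = 0"
      using alg_closed_imp_poly_has_root by blast
    then have z': "cpoly ?d z = 0" by (simp add: cpoly_def)
    obtain e1 where "f = ?d * e1" by (meson dvd_def gcd_dvd1)
    then have "cpoly f z = 0" using z' by (metis cpoly_mult mult_zero_left)
    moreover obtain e2 where "g = ?d * e2" by (meson dvd_def gcd_dvd2)
    then have "cpoly g z = 0" using z' by (metis cpoly_mult mult_zero_left)
    ultimately show ?thesis using nr by blast
  qed
qed

definition quad :: "real \<Rightarrow> real \<Rightarrow> real poly" where
  "quad a b = [:a^2+b^2, -2*a, 1:]"

lemma cpoly_quad: "cpoly (quad a b) z = (z - Complex a b) * (z - Complex a (-b))"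
  by (simp add: quad_def complex_eq_iff algebra_simps power2_eq_square)

lemma quad_root: "cpoly (quad a b) z = 0 \<longleftrightarrow> z = Complex a b \<or> z = Complex a (-b)"
  by (simp add: cpoly_quad)

lemma degree_quad: "degree (quad a b) = 2"
  by (simp add: quad_def)

lemma quad_nz: "quad a b \<noteq> 0"
  by (simp add: quad_def)

lemma lin_root_dvd: "cpoly r (of_real c) = 0 \<Longrightarrow> [:-c,1:] dvd r"
  by (simp add: cpoly_of_real poly_eq_0_iff_dvd[symmetric])

lemma deg1_form: "degree (s::real poly) \<le> 1 \<Longrightarrow> s = [:coeff s 0, coeff s 1:]"
  by (rule poly_eqI) (auto simp: coeff_pCons coeff_eq_0 split: nat.split)

lemma quad_root_dvd:
  assumes b: "b \<noteq> 0" and r: "cpoly r w = 0" and w: "cpoly (quad a b) w = 0"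
  shows "quad a b dvd r"
proof -
  let ?Q = "quad a b"
  let ?s = "r mod ?Q"
  have "r = ?Q * (r div ?Q) + ?s" by simp
  then have "cpoly r w = cpoly ?Q w * cpoly (r div ?Q) w + cpoly ?s w"
    by (metis cpoly_add cpoly_mult)
  then have s0: "cpoly ?s w = 0" using r w by simp
  have "?s = 0"
  proof (rule ccontr)
    assume "?s \<noteq> 0"
    then have "degree ?s < 2" using degree_mod_less[OF quad_nz, of r a b] by (simp add: degree_quad)
    then have sf: "?s = [:coeff ?s 0, coeff ?s 1:]" by (intro deg1_form) simp
    have imw: "Im w \<noteq> 0" using w b by (auto simp: quad_root)
    have "cpoly [:coeff ?s 0, coeff ?s 1:] w = 0" using s0 sf by simp
    then have e: "of_real (coeff ?s 0) + w * of_real (coeff ?s 1) = 0" by simp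
    then have "Im w * coeff ?s 1 = 0" by (simp add: complex_eq_iff)
    then have c1: "coeff ?s 1 = 0" using imw by simp
    then have "coeff ?s 0 = 0" using e by (simp add: complex_eq_iff)
    then have "?s = 0" using sf c1 by (metis pCons_0_0)
    then show False using \<open>?s \<noteq> 0\<close> by simp
  qed
  then show ?thesis by (simp add: mod_eq_0_iff_dvd)
qed


definition Mz :: "real^'n^'n \<Rightarrow> complex \<Rightarrow> complex^'n^'n" where
  "Mz A z = (\<chi> i j. complex_of_real (A $ i $ j) - (if i = j then z else 0))"

definition efac :: "real^'n^'n \<Rightarrow> real poly \<Rightarrow> bool" where
  "efac A F \<longleftrightarrow> (\<exists>c. F = [:-c,1:] \<and> det (A - mat c) = 0) \<or>
                (\<exists>a b. F = quad a b \<and> b > 0 \<and> det (Mz A (Complex a b)) = 0)"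

definition eig :: "real^'n^'n \<Rightarrow> real poly \<Rightarrow> (real^'n) set" where
  "eig A F = {x. pa A (F ^ CARD('n)) x = 0}"

lemma mker_mpow: "mker (mpow M k) = {x. ((*v) M ^^ k) x = 0}"
  by (simp add: mker_def mpow_vec)

lemma E_char:
  fixes A :: "real^'n^'n"
  shows "gen_real_eigenspaces A = {eig A F | F. efac A F}"
proof -
  have l: "mker (mpow (A - mat c) CARD('n)) = eig A [:-c,1:]" for c
  proof -
    have "(*v) (A - mat c) = pa A [:-c,1:]" by (rule ext) (simp only: pa_lin)
    then show ?thesis by (simp add: mker_mpow eig_def pa_power)
  qed
  have q: "mker (mpow ((A - mat a) ** (A - mat a) + mat (b^2)) CARD('n)) = eig A (quad a b)" for a b
  proof -
    have "(*v) ((A - mat a) ** (A - mat a) + mat (b^2)) = pa A (quad a b)"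
      by (rule ext) (simp only: pa_quad quad_def)
    then show ?thesis by (simp add: mker_mpow eig_def pa_power)
  qed
  show ?thesis
    unfolding gen_real_eigenspaces_def efac_def Mz_def l q by blast
qed

lemma lin_inj:
  fixes A :: "real^'n^'n"
  assumes "det (A - mat c) \<noteq> 0" "pa A [:-c,1:] x = 0"
  shows "x = 0"
proof -
  have "invertible (A - mat c)" using assms(1) invertible_det_nz by blast
  then have "inj ((*v) (A - mat c))" by (rule inj_matrix_vector_mult)
  moreover have "(A - mat c) *v x = (A - mat c) *v 0" using assms(2) by (simp only: pa_lin matrix_vector_mult_0_right)
  ultimately show ?thesis by (meson injD)
qed

lemma quad_inj:
  fixes A :: "real^'n^'n"
  assumes d: "det (Mz A (Complex a b)) \<noteq> 0" and b: "b \<noteq> 0" and q: "pa A (quad a b) x = 0"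
  shows "x = 0"
proof -
  let ?z = "Complex a b"
  define u where "u = A *v x - a *\<^sub>R x"
  have h: "(a^2+b^2) *\<^sub>R x + A *v (A *v x - (2 * a) *\<^sub>R x) = 0"
    using q by (simp add: quad_def)
  then have h': "(a^2+b^2) *\<^sub>R x + (A *v (A *v x) - (2*a) *\<^sub>R (A *v x)) = 0"
    by (simp only: matrix_vector_mult_diff_distrib matrix_vector_mult_scaleR)
  have gen: "\<And>p t s :: real^'n. p + (t - s) = 0 \<Longrightarrow> t = s - p" by (simp add: algebra_simps)
  have AAx: "A *v (A *v x) = (2*a) *\<^sub>R (A *v x) - (a^2+b^2) *\<^sub>R x" by (rule gen[OF h'])
  have two: "(2*a) *\<^sub>R v = a *\<^sub>R v + a *\<^sub>R v" for v :: "real^'n"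
    by (metis mult_2 scaleR_left_distrib)
  have gen2: "\<And>y z :: real^'n. z = a *\<^sub>R y + a *\<^sub>R y - (a^2+b^2) *\<^sub>R x \<Longrightarrow>
      z - a *\<^sub>R y = a *\<^sub>R (y - a *\<^sub>R x) - b^2 *\<^sub>R x"
    by (simp add: algebra_simps power2_eq_square)
  have Au: "A *v u = a *\<^sub>R u - b^2 *\<^sub>R x"
    unfolding u_def matrix_vector_mult_diff_distrib matrix_vector_mult_scaleR
    by (rule gen2) (simp add: AAx two)
  have Ax: "A *v x = u + a *\<^sub>R x" by (simp add: u_def)
  define w where "w = (\<chi> i. Complex (u $ i) (b * x $ i))"
  have "Mz A ?z *v w = 0"
  proof (subst vec_eq_iff, rule allI)
    fix i
    have "(Mz A ?z *v w) $ i = (\<Sum>j\<in>UNIV. complex_of_real (A $ i $ j) * w $ j) - ?z * w $ i"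
    proof -
      have "(Mz A ?z *v w) $ i = (\<Sum>j\<in>UNIV. complex_of_real (A $ i $ j) * w $ j - (if i = j then ?z * w $ j else 0))"
        by (simp add: Mz_def matrix_vector_mult_def left_diff_distrib) (rule sum.cong, auto)
      also have "\<dots> = (\<Sum>j\<in>UNIV. complex_of_real (A $ i $ j) * w $ j) - ?z * w $ i"
        by (simp add: sum_subtractf sum.delta)
      finally show ?thesis .
    qed
    also have "(\<Sum>j\<in>UNIV. complex_of_real (A $ i $ j) * w $ j) = Complex ((A *v u) $ i) (b * (A *v x) $ i)"
      by (simp add: complex_eq_iff Re_sum Im_sum w_def matrix_vector_mult_def sum_distrib_left mult_ac)
    also have "\<dots> = ?z * w $ i"
      by (simp add: Au Ax w_def complex_eq_iff algebra_simps power2_eq_square)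
    finally show "(Mz A ?z *v w) $ i = 0 $ i" by simp
  qed
  moreover have "invertible (Mz A ?z)" using d invertible_det_nz by blast
  then have "inj ((*v) (Mz A ?z))" by (rule inj_matrix_vector_mult)
  ultimately have "w = 0" by (metis injD matrix_vector_mult_0_right)
  then have "\<forall>i. b * x $ i = 0" by (simp add: w_def vec_eq_iff complex_eq_iff)
  then show ?thesis using b by (simp add: vec_eq_iff)
qed


lemma eig_sub: "subspace (eig A F)"
  unfolding eig_def by (rule linear_subspace_kernel[OF linear_pa])

lemma eig_inv: "x \<in> eig A F \<Longrightarrow> pa A g x \<in> eig A F"
  unfolding eig_def by (simp add: pa_comm[of A _ g])

lemma eig_invA: "x \<in> eig A F \<Longrightarrow> A *v x \<in> eig A F"
  using eig_inv[of x A F "[:0,1:]"] by simp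

lemma pa_inv_V:
  assumes "subspace V" "\<And>x. x \<in> V \<Longrightarrow> A *v x \<in> V" "x \<in> V"
  shows "pa A p x \<in> V"
  using assms(3)
proof (induction p arbitrary: x)
  case 0 then show ?case using assms(1) by (simp add: subspace_0)
next
  case (pCons a p)
  then show ?case using assms(1,2) by (simp add: subspace_add subspace_scale)
qed

lemma cpoly_lin: "cpoly [:-c,1:] z = z - of_real c"
  by simp

lemma efac_cases:
  assumes "efac A F"
  obtains c where "F = [:-c,1:]" | a b where "F = quad a b" "b > 0"
  using assms unfolding efac_def by blast

lemma efac_nz: "efac A F \<Longrightarrow> F \<noteq> 0"
  by (auto simp: efac_def quad_nz)

lemma efac_coprime:
  assumes F: "efac A F" and F': "efac A F'" and ne: "F \<noteq> F'"
  shows "coprime (F ^ k) (F' ^ k')"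
proof -
  have "coprime F F'"
  proof (rule coprime_noroot[OF efac_nz[OF F]])
    fix z assume z: "cpoly F z = 0"
    show "cpoly F' z \<noteq> 0"
    proof
      assume z': "cpoly F' z = 0"
      show False
      proof (cases rule: efac_cases[OF F])
        case (1 c)
        then have zc: "z = of_real c" using z by simp
        show False
        proof (cases rule: efac_cases[OF F'])
          case (1 c') then show False using z' zc ne \<open>F = [:-c,1:]\<close> by simp
        next
          case (2 a' b')
          then have "z = Complex a' b' \<or> z = Complex a' (-b')" using z' by (simp add: quad_root)
          then show False using zc \<open>b' > 0\<close> by (auto simp: complex_eq_iff)
        qed
      next
        case (2 a b)
        then have zq: "z = Complex a b \<or> z = Complex a (-b)" using z by (simp add: quad_root)
        show False
        proof (cases rule: efac_cases[OF F'])
          case (1 c') then show False using z' zq \<open>b > 0\<close> by (auto simp: complex_eq_iff)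
        next
          case (2 a' b')
          then have "z = Complex a' b' \<or> z = Complex a' (-b')" using z' by (simp add: quad_root)
          then have "a = a' \<and> b = b'" using zq \<open>b > 0\<close> \<open>b' > 0\<close> by (auto simp: complex_eq_iff)
          then show False using \<open>F = quad a b\<close> \<open>F' = quad a' b'\<close> ne by simp
        qed
      qed
    qed
  qed
  then show ?thesis by simp
qed

lemma inj_pow:
  fixes f :: "'a::zero \<Rightarrow> 'a"
  assumes "\<And>y. f y = 0 \<Longrightarrow> y = 0" "(f ^^ m) y = 0"
  shows "y = 0"
  using assms(2)
proof (induction m arbitrary: y)
  case (Suc m)
  then have "(f ^^ m) (f y) = 0" by (simp add: funpow_Suc_right del: funpow.simps)
  then show ?case using Suc.IH assms(1) by blast
qed simp


lemma bezout_poly: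
  fixes f g :: "real poly"
  assumes "coprime f g"
  obtains u v where "u * f + v * g = 1"
proof -
  have "fst (bezout_coefficients f g) * f + snd (bezout_coefficients f g) * g = gcd f g"
    by (rule bezout_coefficients_fst_snd)
  then show ?thesis using assms that by simp
qed

lemma good_factor:
  fixes A :: "real^'n^'n" and p :: "real poly"
  assumes p: "p \<noteq> 0" "degree p \<noteq> 0"
  obtains F where "F dvd p" "degree F > 0"
    "\<And>r. coprime F r \<or> F dvd r"
    "efac A F \<or> (\<forall>y. pa A F y = 0 \<longrightarrow> y = 0)"
proof -
  have "degree (map_poly complex_of_real p) > 0" using p by (simp add: degree_cmap)
  then obtain z where "poly (map_poly complex_of_real p) z = 0"
    using alg_closed_imp_poly_has_root by blast
  then have z: "cpoly p z = 0" by (simp add: cpoly_def)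
  show ?thesis
  proof (cases "Im z = 0")
    case True
    define c where "c = Re z"
    have zc: "z = of_real c" using True by (simp add: c_def complex_eq_iff)
    let ?F = "[:-c,1:]"
    show ?thesis
    proof (rule that[of ?F])
      show "?F dvd p" using z zc lin_root_dvd by blast
      show "degree ?F > 0" by simp
      show "coprime ?F r \<or> ?F dvd r" for r
      proof (cases "?F dvd r")
        case False
        have "coprime ?F r"
        proof (rule coprime_noroot)
          fix w assume "cpoly ?F w = 0"
          then have "w = of_real c" by simp
          then show "cpoly r w \<noteq> 0" using False lin_root_dvd by blast
        qed simp
        then show ?thesis by simp
      qed simp
      show "efac A ?F \<or> (\<forall>y. pa A ?F y = 0 \<longrightarrow> y = 0)"
      proof (cases "det (A - mat c) = 0")
        case True then show ?thesis unfolding efac_def by blast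
      next
        case False then show ?thesis using lin_inj[OF False] by simp
      qed
    qed
  next
    case False
    define a where "a = Re z"
    define b where "b = \<bar>Im z\<bar>"
    have b: "b > 0" using False by (simp add: b_def)
    let ?F = "quad a b"
    have zr: "cpoly ?F z = 0"
      unfolding quad_root by (cases "Im z > 0") (auto simp: a_def b_def complex_eq_iff)
    show ?thesis
    proof (rule that[of ?F])
      show "?F dvd p" by (rule quad_root_dvd[OF _ z zr]) (use b in simp)
      show "degree ?F > 0" by (simp add: degree_quad)
      show "coprime ?F r \<or> ?F dvd r" for r
      proof (cases "?F dvd r")
        case False
        have "coprime ?F r"
        proof (rule coprime_noroot)
          fix w assume w: "cpoly ?F w = 0"
          show "cpoly r w \<noteq> 0"
          proof
            assume rw: "cpoly r w = 0"
            have "?F dvd r" by (rule quad_root_dvd[OF _ rw w]) (use b in simp)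
            then show False using False by simp
          qed
        qed (rule quad_nz)
        then show ?thesis by simp
      qed simp
      show "efac A ?F \<or> (\<forall>y. pa A ?F y = 0 \<longrightarrow> y = 0)"
      proof (cases "det (Mz A (Complex a b)) = 0")
        case True then show ?thesis unfolding efac_def using b by blast
      next
        case False then show ?thesis using quad_inj[OF False] b by simp
      qed
    qed
  qed
qed

lemma decomp:
  fixes A :: "real^'n^'n"
  assumes V: "subspace V" "\<And>x. x \<in> V \<Longrightarrow> A *v x \<in> V"
  shows "p \<noteq> 0 \<Longrightarrow> x \<in> V \<Longrightarrow> pa A p x = 0 \<Longrightarrow>
    x \<in> span (\<Union>S\<in>gen_real_eigenspaces A. V \<inter> S)"
proof (induction "degree p" arbitrary: p x rule: less_induct)
  case less
  let ?T = "span (\<Union>S\<in>gen_real_eigenspaces A. V \<inter> S)"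
  show ?case
  proof (cases "degree p = 0")
    case True
    obtain a where a: "p = [:a:]" using degree_eq_zeroE[OF True] by blast
    then have "a \<noteq> 0" using less.prems(1) by simp
    moreover have "a *\<^sub>R x = 0" using less.prems(3) a pa_const[of A a x] by simp
    ultimately have "x = 0" by simp
    then show ?thesis by (simp add: span_zero)
  next
    case False
    obtain F where F: "F dvd p" "degree F > 0" "\<And>r. coprime F r \<or> F dvd r"
      "efac A F \<or> (\<forall>y. pa A F y = 0 \<longrightarrow> y = 0)"
      using good_factor[OF less.prems(1) False] by blast
    have F0: "F \<noteq> 0" using F(2) by auto
    have nu: "\<not> is_unit F" using is_unit_iff_degree[OF F0] F(2) by simp
    define m where "m = multiplicity F p"
    obtain r where r: "p = F ^ m * r" "\<not> F dvd r"
      using multiplicity_decompose'[OF less.prems(1) nu] unfolding m_def by blast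
    have "multiplicity F p > 0" using multiplicity_gt_zero_iff[OF less.prems(1) nu] F(1) by blast
    then have m: "m > 0" unfolding m_def .
    have r0: "r \<noteq> 0" using r(1) less.prems(1) by (metis mult_zero_right)
    have "degree (F ^ m * r) = m * degree F + degree r"
      using r0 F0 by (simp add: degree_mult_eq degree_power_eq)
    then have "degree p = m * degree F + degree r" using r(1) by simp
    then have dr: "degree r < degree p" using m F(2) by simp
    have "coprime F r" using F(3) r(2) by blast
    then have "coprime (F ^ m) r" by simp
    then obtain u v where uv: "u * F ^ m + v * r = 1" by (rule bezout_poly)
    define y1 where "y1 = pa A (u * F ^ m) x"
    define y2 where "y2 = pa A (v * r) x"
    have x: "x = y1 + y2"
      using pa_add[of A "u * F ^ m" "v * r" x] uv by (simp add: y1_def y2_def)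
    note pm = r(1)
    have y1V: "y1 \<in> V" unfolding y1_def by (rule pa_inv_V[OF V less.prems(2)])
    have y2V: "y2 \<in> V" unfolding y2_def by (rule pa_inv_V[OF V less.prems(2)])
    have "pa A r y1 = pa A u (pa A p x)"
      unfolding y1_def pa_mult[symmetric] pm by (simp add: mult_ac)
    then have "pa A r y1 = 0" using less.prems(3) by simp
    then have y1T: "y1 \<in> ?T" using less.hyps[OF dr r0 y1V] by blast
    have "pa A (F ^ m) y2 = pa A v (pa A p x)"
      unfolding y2_def pa_mult[symmetric] pm by (simp add: mult_ac)
    then have y2k: "(pa A F ^^ m) y2 = 0" using less.prems(3) by (simp add: pa_power)
    have y2T: "y2 \<in> ?T"
    proof (cases "efac A F")
      case True
      have "(pa A F ^^ CARD('n)) y2 = 0" by (rule ker_stab[OF linear_pa y2k])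
      then have "y2 \<in> eig A F" by (simp add: eig_def pa_power)
      moreover have "eig A F \<in> gen_real_eigenspaces A" using True by (auto simp: E_char)
      ultimately show ?thesis using y2V by (intro span_base) blast
    next
      case False
      then have "y2 = 0" using F(4) inj_pow[OF _ y2k] by blast
      then show ?thesis by (simp add: span_zero)
    qed
    show ?thesis using x y1T y2T by (simp add: span_add)
  qed
qed


lemma indep:
  fixes A :: "real^'n^'n"
  assumes F: "efac A F" and z: "z \<in> eig A F" and sp: "z \<in> span (\<Union>E')"
    and E': "E' \<subseteq> gen_real_eigenspaces A" "eig A F \<notin> E'"
  shows "z = 0"
proof -
  let ?n = "CARD('n)"
  have "\<exists>h. coprime (F ^ ?n) h \<and> pa A h z = 0"
    using sp
  proof (induction rule: span_induct_alt)
    case base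
    show ?case by (rule exI[of _ 1]) simp
  next
    case (step c x y)
    then obtain h where h: "coprime (F ^ ?n) h" "pa A h y = 0" by blast
    from step.hyps(1) obtain T where T: "T \<in> E'" "x \<in> T" by blast
    then obtain F' where F': "efac A F'" "T = eig A F'" using E'(1) by (auto simp: E_char)
    have ne: "F' \<noteq> F" using F' T E'(2) by blast
    have cp: "coprime (F ^ ?n) (F' ^ ?n * h)"
      using efac_coprime[OF F F'(1) ne[symmetric], of ?n ?n] h(1) by simp
    have "pa A (F' ^ ?n * h) (c *\<^sub>R x + y) = pa A h (pa A (F' ^ ?n) (c *\<^sub>R x)) + pa A (F' ^ ?n) (pa A h y)"
      by (simp add: pa_add_vec pa_mult[symmetric] mult.commute)
    also have "\<dots> = 0" using T(2) F'(2) h(2) by (simp add: eig_def pa_scale_vec)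
    finally show ?case using cp by blast
  qed
  then obtain h where h: "coprime (F ^ ?n) h" "pa A h z = 0" by blast
  obtain u v where uv: "u * F ^ ?n + v * h = 1" using bezout_poly[OF h(1)] by blast
  have "z = pa A (u * F ^ ?n + v * h) z" by (simp add: uv)
  also have "\<dots> = pa A u (pa A (F ^ ?n) z) + pa A v (pa A h z)" by (simp add: pa_add pa_mult)
  also have "\<dots> = 0" using z h(2) by (simp add: eig_def)
  finally show ?thesis .
qed

lemma reach_sub:
  fixes A :: "real^'n^'n"
  shows "subspace (reach_space A G)"
proof -
  let ?R = "reach_space A G"
  have 0: "0 \<in> ?R" unfolding reach_space_def mem_Collect_eq
    by (rule exI[of _ "\<lambda>i. 0"]) simp
  have a: "x + y \<in> ?R" if hx: "x \<in> ?R" and hy: "y \<in> ?R" for x y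
  proof -
    obtain u where u: "x = (\<Sum>i<CARD('n). (mpow A i ** G) *v u i)" using hx unfolding reach_space_def by blast
    obtain v where v: "y = (\<Sum>i<CARD('n). (mpow A i ** G) *v v i)" using hy unfolding reach_space_def by blast
    show ?thesis unfolding reach_space_def mem_Collect_eq u v
      by (rule exI[of _ "\<lambda>i. u i + v i"]) (simp add: matrix_vector_right_distrib sum.distrib)
  qed
  have s: "c *\<^sub>R x \<in> ?R" if hx: "x \<in> ?R" for x c
  proof -
    obtain u where u: "x = (\<Sum>i<CARD('n). (mpow A i ** G) *v u i)" using hx unfolding reach_space_def by blast
    show ?thesis unfolding reach_space_def mem_Collect_eq u
      by (rule exI[of _ "\<lambda>i. c *\<^sub>R u i"]) (simp add: matrix_vector_mult_scaleR scaleR_sum_right)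
  qed
  show ?thesis unfolding subspace_def using 0 a s by blast
qed

lemma reach_mem:
  fixes A :: "real^'n^'n"
  assumes "i < CARD('n)"
  shows "(mpow A i ** G) *v v \<in> reach_space A G"
proof -
  have "(\<Sum>j<CARD('n). (mpow A j ** G) *v (if j = i then v else 0)) = (mpow A i ** G) *v v"
  proof -
    have "(\<Sum>j<CARD('n). (mpow A j ** G) *v (if j = i then v else 0)) =
          (\<Sum>j<CARD('n). if j = i then (mpow A j ** G) *v v else 0)"
      by (rule sum.cong) auto
    also have "\<dots> = (mpow A i ** G) *v v" using assms by (simp add: sum.delta)
    finally show ?thesis .
  qed
  then show ?thesis unfolding reach_space_def mem_Collect_eq
    by (intro exI[of _ "\<lambda>j. if j = i then v else 0"]) simp
qed

lemma reach_inv: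
  fixes A :: "real^'n^'n"
  assumes x: "x \<in> reach_space A G"
  shows "A *v x \<in> reach_space A G"
proof -
  let ?n = "CARD('n)"
  obtain u where u: "x = (\<Sum>i<?n. (mpow A i ** G) *v u i)" using x unfolding reach_space_def by blast
  have trm: "A *v ((mpow A i ** G) *v v) \<in> reach_space A G" for i v
  proof -
    let ?g = "G *v v"
    have kr: "span {((*v) A ^^ k) ?g | k. k < ?n} \<subseteq> reach_space A G"
    proof (rule span_minimal[OF _ reach_sub], safe)
      fix k assume "k < ?n"
      then have "(mpow A k ** G) *v v \<in> reach_space A G" by (rule reach_mem)
      then show "((*v) A ^^ k) ?g \<in> reach_space A G"
        by (simp add: matrix_vector_mul_assoc[symmetric] mpow_vec)
    qed
    have "A *v ((mpow A i ** G) *v v) = ((*v) A ^^ Suc i) ?g"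
      by (simp add: matrix_vector_mul_assoc[symmetric] mpow_vec)
    also have "\<dots> \<in> span {((*v) A ^^ k) ?g | k. k < ?n}"
      by (rule krylov[OF matrix_vector_mul_linear])
    finally show ?thesis using kr by blast
  qed
  have "A *v x = (\<Sum>i<?n. A *v ((mpow A i ** G) *v u i))"
    unfolding u by (rule linear_sum[OF matrix_vector_mul_linear])
  also have "\<dots> \<in> reach_space A G"
    by (rule subspace_sum[OF reach_sub]) (use trm in blast)
  finally show ?thesis .
qed

lemma unobs_sub: "subspace (unobs_space A C)"
  unfolding subspace_def unobs_space_def
  by (auto simp: matrix_vector_right_distrib matrix_vector_mult_scaleR)

lemma unobs_C:
  fixes A :: "real^'n^'n"
  assumes "x \<in> unobs_space A C"
  shows "C *v x = 0"
  using assms unfolding unobs_space_def by (auto dest: spec[of _ 0])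

lemma unobs_I:
  fixes A :: "real^'n^'n"
  assumes "\<And>i. C *v (((*v) A ^^ i) x) = 0"
  shows "x \<in> unobs_space A C"
  using assms unfolding unobs_space_def by (simp add: matrix_vector_mul_assoc[symmetric] mpow_vec)

lemma dim_rel:
  fixes R1 R2 :: "real^'n^'k"
  assumes tot: "total_rel (rel_ker R1 R2)"
  shows "dim (rel_ker R1 R2) = CARD('n) + dim (mker R1)"
proof -
  let ?W = "rel_ker R1 R2"
  let ?T = "(UNIV :: (real^'n) set) \<times> {0::real^'n}"
  have sW: "subspace ?W"
    unfolding subspace_def rel_ker_def
    by (auto simp: matrix_vector_right_distrib matrix_vector_mult_scaleR algebra_simps zero_prod_def)
  have sT: "subspace ?T" by (intro subspace_Times subspace_UNIV subspace_single_0)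
  have sK: "subspace (mker R1)"
    unfolding mker_def by (rule linear_subspace_kernel[OF matrix_vector_mul_linear])
  have sum: "{x + y |x y. x \<in> ?W \<and> y \<in> ?T} = UNIV"
  proof -
    have "(a, b) \<in> {x + y |x y. x \<in> ?W \<and> y \<in> ?T}" for a b :: "real^'n"
    proof -
      obtain a' where a': "(a', b) \<in> ?W" using tot unfolding total_rel_def by blast
      have "(a, b) = (a', b) + (a - a', 0)" by simp
      then show ?thesis using a' by blast
    qed
    note h = this
    show ?thesis
    proof (rule sym, rule UNIV_eq_I)
      fix z :: "(real^'n) \<times> (real^'n)"
      show "z \<in> {x + y |x y. x \<in> ?W \<and> y \<in> ?T}" using h[of "fst z" "snd z"] by simp
    qed
  qed
  have int: "?W \<inter> ?T = mker R1 \<times> {0}"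
    by (auto simp: rel_ker_def mker_def)
  have "dim (UNIV :: ((real^'n) \<times> (real^'n)) set) + dim (mker R1 \<times> {0::real^'n}) = dim ?W + dim ?T"
    using dim_sums_Int[OF sW sT] unfolding sum int .
  moreover have "dim (UNIV :: ((real^'n) \<times> (real^'n)) set) = 2 * CARD('n)"
    by (simp add: dim_UNIV)
  moreover have "dim (mker R1 \<times> {0::real^'n}) = dim (mker R1)"
    by (simp add: dim_Times[OF sK subspace_single_0])
  moreover have "dim ?T = CARD('n)"
    by (simp add: dim_Times[OF subspace_UNIV subspace_single_0] dim_UNIV)
  ultimately show ?thesis by simp
qed


theorem theorem8:
  fixes A :: "real^'n^'n" and B :: "real^'m^'n" and G :: "real^'l^'n"
    and C :: "real^'n^'p" and \<mu> :: "real^'l" and R :: "real^'n^'r"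
  assumes split: "\<forall>S \<in> gen_real_eigenspaces A.
      (S \<subseteq> reach_space A G \<or> S \<inter> reach_space A G = {0}) \<and>
      (S \<subseteq> unobs_space A C \<or> S \<inter> unobs_space A C = {0})"
    and kerR: "mker R = S_Sigma A G C"
  shows "total_rel (rel_ker R R) \<and> admissible A B G C \<mu> R R \<and>
    (\<forall>(R1 :: real^'n^'k) R2. total_rel (rel_ker R1 R2) \<and> admissible A B G C \<mu> R1 R2
        \<longrightarrow> dim (rel_ker R1 R2) \<le> dim (rel_ker R R))"
proof -
  let ?E = "gen_real_eigenspaces A"
  let ?Gs = "reach_space A G"
  let ?Q = "unobs_space A C"
  let ?SS = "S_Sigma A G C"
  define ES where "ES = {S \<in> ?E. S \<subseteq> ?Q \<and> S \<inter> ?Gs = {0}}"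
  have SSdef: "?SS = span (\<Union>ES)" by (simp add: S_Sigma_def ES_def)
  have sSS: "subspace ?SS" unfolding SSdef by (rule subspace_span)
  have SSQ: "?SS \<subseteq> ?Q" unfolding SSdef by (rule span_minimal[OF _ unobs_sub]) (auto simp: ES_def)
  have ES_eig: "\<exists>F. efac A F \<and> S = eig A F" if "S \<in> ES" for S
    using that unfolding ES_def E_char by blast
  have SSinv: "A *v x \<in> ?SS" if "x \<in> ?SS" for x
  proof -
    have "(*v) A ` ?SS = span ((*v) A ` \<Union>ES)"
      unfolding SSdef by (rule linear_span_image[OF matrix_vector_mul_linear, symmetric])
    also have "\<dots> \<subseteq> ?SS" unfolding SSdef
    proof (rule span_mono, safe)
      fix y S assume yS: "y \<in> S" and S: "S \<in> ES"
      obtain F where "efac A F" "S = eig A F" using ES_eig[OF S] by blast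
      then have "A *v y \<in> S" using yS eig_invA by blast
      then show "A *v y \<in> \<Union>ES" using S by blast
    qed
    finally show ?thesis using that by blast
  qed
  have G0: "?Gs \<inter> ?SS = {0}"
  proof
    show "{0} \<subseteq> ?Gs \<inter> ?SS" using subspace_0[OF reach_sub] subspace_0[OF sSS] by blast
  next
    show "?Gs \<inter> ?SS \<subseteq> {0}"
    proof
      fix y assume y: "y \<in> ?Gs \<inter> ?SS"
      let ?V = "?Gs \<inter> ?SS"
      have sV: "subspace ?V" by (rule subspace_inter[OF reach_sub sSS])
      have iV: "A *v x \<in> ?V" if "x \<in> ?V" for x using that reach_inv SSinv by blast
      obtain p where p: "p \<noteq> 0" "pa A p y = 0" using annih by blast
      have ysp: "y \<in> span (\<Union>S\<in>?E. ?V \<inter> S)" by (rule decomp[OF sV iV p(1) y p(2)])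
      have "span (\<Union>S\<in>?E. ?V \<inter> S) \<subseteq> {0}"
      proof (rule span_minimal[OF _ subspace_single_0], safe)
        fix S z assume S: "S \<in> ?E" and z: "z \<in> ?Gs" "z \<in> ?SS" "z \<in> S"
        obtain F where F: "efac A F" "S = eig A F" using S unfolding E_char by blast
        show "z = 0"
        proof (cases "S \<inter> ?Gs = {0}")
          case True then show ?thesis using z by blast
        next
          case False
          then have "S \<notin> ES" by (simp add: ES_def)
          moreover have "ES \<subseteq> ?E" by (auto simp: ES_def)
          ultimately show ?thesis using indep[OF F(1), of z ES] z F(2) SSdef by auto
        qed
      qed
      then show "y \<in> {0}" using ysp by blast
    qed
  qed
  have Rrel: "(x, y) \<in> rel_ker R R \<longleftrightarrow> x - y \<in> ?SS" for x y
    by (simp add: rel_ker_def kerR[symmetric] mker_def matrix_vector_mult_diff_distrib)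
  have tot: "total_rel (rel_ker R R)"
    unfolding total_rel_def using Rrel[of x x for x] subspace_0[OF sSS] by auto
  have adm: "admissible A B G C \<mu> R R"
    unfolding admissible_def
  proof (intro conjI)
    show "\<forall>(x, y)\<in>rel_ker R R. (A *v x, A *v y) \<in> rel_ker R R"
    proof safe
      fix x y assume "(x, y) \<in> rel_ker R R"
      then have "x - y \<in> ?SS" by (simp add: Rrel)
      then have "A *v (x - y) \<in> ?SS" by (rule SSinv)
      then show "(A *v x, A *v y) \<in> rel_ker R R" by (simp add: Rrel matrix_vector_mult_diff_distrib)
    qed
    show "rel_ker R R \<subseteq> rel_ker C C"
    proof safe
      fix x y assume "(x, y) \<in> rel_ker R R"
      then have "x - y \<in> ?Q" using Rrel SSQ by blast
      then have "C *v (x - y) = 0" by (rule unobs_C)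
      then show "(x, y) \<in> rel_ker C C" by (simp add: rel_ker_def matrix_vector_mult_diff_distrib)
    qed
    show "?Gs \<inter> mker R = {0}" using G0 kerR by simp
    then show "?Gs \<inter> mker R = {0}" .
  qed auto
  have max: "dim (rel_ker R1 R2) \<le> dim (rel_ker R R)"
    if t: "total_rel (rel_ker R1 R2)" and ad: "admissible A B G C \<mu> R1 R2" for R1 R2 :: "real^'n^'k"
  proof -
    let ?K = "mker R1"
    have Kr: "x \<in> ?K \<longleftrightarrow> (x, 0) \<in> rel_ker R1 R2" for x by (simp add: mker_def rel_ker_def)
    have h0: "(A *v x, A *v y) \<in> rel_ker R1 R2" if "(x, y) \<in> rel_ker R1 R2" for x y
      using ad that unfolding admissible_def by blast
    have h4: "rel_ker R1 R2 \<subseteq> rel_ker C C" using ad unfolding admissible_def by blast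
    have h5: "?Gs \<inter> ?K = {0}" using ad unfolding admissible_def by blast
    have sK: "subspace ?K"
      unfolding mker_def by (rule linear_subspace_kernel[OF matrix_vector_mul_linear])
    have iK: "A *v x \<in> ?K" if "x \<in> ?K" for x
      using h0[of x 0] that Kr by simp
    have iKp: "((*v) A ^^ i) x \<in> ?K" if "x \<in> ?K" for x i
      using that by (induction i) (auto intro: iK)
    have KQ: "x \<in> ?Q" if "x \<in> ?K" for x
    proof (rule unobs_I)
      fix i
      have "(((*v) A ^^ i) x, 0) \<in> rel_ker C C" using iKp[OF that] Kr h4 by blast
      then show "C *v (((*v) A ^^ i) x) = 0" by (simp add: rel_ker_def)
    qed
    have KSS: "?K \<subseteq> ?SS"
    proof
      fix x assume x: "x \<in> ?K"
      obtain p where p: "p \<noteq> 0" "pa A p x = 0" using annih by blast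
      have xsp: "x \<in> span (\<Union>S\<in>?E. ?K \<inter> S)" by (rule decomp[OF sK iK p(1) x p(2)])
      have "span (\<Union>S\<in>?E. ?K \<inter> S) \<subseteq> ?SS"
      proof (rule span_minimal[OF _ sSS], safe)
        fix S z assume S: "S \<in> ?E" and z: "z \<in> ?K" "z \<in> S"
        have sp: "S \<subseteq> ?Gs \<or> S \<inter> ?Gs = {0}" "S \<subseteq> ?Q \<or> S \<inter> ?Q = {0}" using split S by auto
        show "z \<in> ?SS"
        proof (cases "S \<subseteq> ?Gs")
          case True
          then have "z = 0" using z h5 by blast
          then show ?thesis using subspace_0[OF sSS] by simp
        next
          case False
          then have SG: "S \<inter> ?Gs = {0}" using sp(1) by blast
          show ?thesis
          proof (cases "S \<subseteq> ?Q")
            case True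
            then have "S \<in> ES" using S SG by (simp add: ES_def)
            then have "z \<in> \<Union>ES" using z by blast
            then show ?thesis unfolding SSdef by (rule span_base)
          next
            case False
            then have "S \<inter> ?Q = {0}" using sp(2) by blast
            then have "z = 0" using z KQ by blast
            then show ?thesis using subspace_0[OF sSS] by simp
          qed
        qed
      qed
      then show "x \<in> ?SS" using xsp by blast
    qed
    have "dim (rel_ker R1 R2) = CARD('n) + dim ?K" by (rule dim_rel[OF t])
    also have "\<dots> \<le> CARD('n) + dim ?SS" using dim_subset[OF KSS] by simp
    also have "\<dots> = dim (rel_ker R R)" using dim_rel[OF tot] kerR by simp
    finally show ?thesis .
  qed
  show ?thesis using tot adm max by blast
qed

end
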